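(* For each $N\ge2$ let $L=\frac{2}{N-1}\sum_{1\le i<j\le N}(Q_{(i,j)}-I)$ act on bounded measurable functions on ${\mathbb T}_N=({\mathbb S}^1)^N$, where the $Q_{(i,j)}$ are Markov operators, each acting only through $v_i,v_j$ (so $Q_{(i,j)}\varphi=\varphi$ whenever $\varphi$ depends on neither $v_i$ nor $v_j$), forming a permutation-covariant family (all obtained from one two-particle Markov operator by relabeling variables). Let $F_{0,N}$ be a symmetric probability density on ${\mathbb T}_N$, and let $\varphi^{(k)}\in L^\infty$ depend only on $v_1,\dots,v_k$. Define $$\varphi^{(k+1)}(v_1,\dots,v_{k+1})=2\sum_{i=1}^k(Q_{(i,k+1)}-I)\varphi^{(k)}(v_1,\dots,v_k).$$ Then, if $N\ge k+1$, $$\int_{{\mathbb T}_N}F_{0,N}\,L\varphi^{(k)}\,{\rm d}v_1\cdots{\rm d}v_N=\int_{{\mathbb T}_N}F_{0,N}\,\big(\varphi^{(k+1)}+\tilde\varphi^{(k+1)}\big)\,{\rm d}v_1\cdots{\rm d}v_N,$$ where $\tilde\varphi^{(k+1)}$ depends only on $v_1,\dots,v_{k+1}$ and satisfies $\|\tilde\varphi^{(k+1)}\|_\infty\le 6\,\frac{k(k-1)}{N-1}\,\|\varphi^{(k)}\|_\infty$.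
   Context: ${\mathbb S}^1$ is the unit circle with normalized uniform measure; a Markov operator is a positive linear operator $Q$ with $Q1=1$. A density on ${\mathbb T}_N$ is symmetric if it is invariant under all permutations of $(v_1,\dots,v_N)$. *)

theory Defs
  imports "HOL-Analysis.Analysis" "HOL-Combinatorics.Permutations"
begin

definition circle :: "complex measure" where
  "circle = distr (uniform_measure lborel {0..<1::real}) (restrict_space borel (sphere 0 1))
              (\<lambda>t. cis (2 * pi * t))"

text \<open>The torus T_N = (S^1)^N; coordinates are indexed 0..N-1 (v_1..v_N in the paper).\<close>
definition torus :: "nat \<Rightarrow> (nat \<Rightarrow> complex) measure" where
  "torus N = PiM {..<N} (\<lambda>_. circle)"

definition bounded_meas :: "'a measure \<Rightarrow> ('a \<Rightarrow> real) \<Rightarrow> bool" where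
  "bounded_meas M f \<longleftrightarrow> f \<in> borel_measurable M \<and> (\<exists>B. \<forall>x\<in>space M. \<bar>f x\<bar> \<le> B)"

definition markov_op :: "'a measure \<Rightarrow> (('a \<Rightarrow> real) \<Rightarrow> 'a \<Rightarrow> real) \<Rightarrow> bool" where
  "markov_op M Q \<longleftrightarrow>
     (\<forall>f. bounded_meas M f \<longrightarrow> bounded_meas M (Q f)) \<and>
     (\<forall>f g. bounded_meas M f \<longrightarrow> bounded_meas M g \<longrightarrow>
        (\<forall>x\<in>space M. Q (\<lambda>y. f y + g y) x = Q f x + Q g x)) \<and>
     (\<forall>f c. bounded_meas M f \<longrightarrow> (\<forall>x\<in>space M. Q (\<lambda>y. c * f y) x = c * Q f x)) \<and>
     (\<forall>f. bounded_meas M f \<longrightarrow> (\<forall>x\<in>space M. f x \<ge> 0) \<longrightarrow> (\<forall>x\<in>space M. Q f x \<ge> 0)) \<and>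
     (\<forall>x\<in>space M. Q (\<lambda>_. 1) x = 1)"

definition Qij :: "(((complex \<times> complex) \<Rightarrow> real) \<Rightarrow> (complex \<times> complex) \<Rightarrow> real)
     \<Rightarrow> nat \<Rightarrow> nat \<Rightarrow> ((nat \<Rightarrow> complex) \<Rightarrow> real) \<Rightarrow> (nat \<Rightarrow> complex) \<Rightarrow> real" where
  "Qij Q i j \<phi> v = Q (\<lambda>(a, b). \<phi> (v(i := a, j := b))) (v i, v j)"

definition Lop :: "nat \<Rightarrow> (((complex \<times> complex) \<Rightarrow> real) \<Rightarrow> (complex \<times> complex) \<Rightarrow> real)
     \<Rightarrow> ((nat \<Rightarrow> complex) \<Rightarrow> real) \<Rightarrow> (nat \<Rightarrow> complex) \<Rightarrow> real" where
  "Lop N Q \<phi> v = 2 / (real N - 1) * (\<Sum>j<N. \<Sum>i<j. (Qij Q i j \<phi> v - \<phi> v))"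

definition depends_only :: "nat \<Rightarrow> nat \<Rightarrow> ((nat \<Rightarrow> complex) \<Rightarrow> real) \<Rightarrow> bool" where
  "depends_only N k \<phi> \<longleftrightarrow>
     (\<forall>v\<in>space (torus N). \<forall>w\<in>space (torus N). (\<forall>i<k. v i = w i) \<longrightarrow> \<phi> v = \<phi> w)"

definition sup_norm :: "'a measure \<Rightarrow> ('a \<Rightarrow> real) \<Rightarrow> real" where
  "sup_norm M f = (SUP x\<in>space M. \<bar>f x\<bar>)"

definition symmetric_density :: "nat \<Rightarrow> ((nat \<Rightarrow> complex) \<Rightarrow> real) \<Rightarrow> bool" where
  "symmetric_density N F \<longleftrightarrow>
     F \<in> borel_measurable (torus N) \<and> (\<forall>v\<in>space (torus N). F v \<ge> 0) \<and>
     integrable (torus N) F \<and> (\<integral>v. F v \<partial>torus N) = 1 \<and>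
     (\<forall>\<sigma>. \<sigma> permutes {..<N} \<longrightarrow> (\<forall>v\<in>space (torus N). F (v \<circ> \<sigma>) = F v))"

end

theory Submission imports Defs "HOL-Probability.Probability" begin
lemma space_circle: "space circle = sphere 0 1"
  by (simp add: circle_def space_restrict_space)
lemma sets_circle: "sets circle = sets (restrict_space borel (sphere (0::complex) 1))"
  by (simp add: circle_def)
lemma prob_circle: "prob_space circle"
  unfolding circle_def
proof (rule prob_space.prob_space_distr)
  show "prob_space (uniform_measure lborel {0..<1::real})"
    by (intro prob_space_uniform_measure) auto
  show "(\<lambda>t. cis (2 * pi * t)) \<in> uniform_measure lborel {0..<1::real} \<rightarrow>\<^sub>M restrict_space borel (sphere 0 1)"
  proof (intro measurable_restrict_space2)
    have "(\<lambda>t::real. cis (2*pi*t)) \<in> borel_measurable borel"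
      by (intro borel_measurable_continuous_onI continuous_intros)
    then show "(\<lambda>t. cis (2 * pi * t)) \<in> borel_measurable (uniform_measure lborel {0..<1::real})"
      using measurable_cong_sets[OF sets_uniform_measure[of lborel "{0..<1::real}"] refl, of borel] by simp
  qed auto
qed
lemma space_torus: "space (torus N) = PiE {..<N} (\<lambda>_. sphere 0 1)"
  by (simp add: torus_def space_PiM space_circle)

lemma bm_const: "bounded_meas M (\<lambda>_. c)"
  unfolding bounded_meas_def by auto

lemma bm_diff: assumes "bounded_meas M f" "bounded_meas M g" shows "bounded_meas M (\<lambda>y. g y - f y)"
proof -
  obtain B1 B2 where "\<forall>x\<in>space M. \<bar>f x\<bar> \<le> B1" "\<forall>x\<in>space M. \<bar>g x\<bar> \<le> B2"
    and m: "f \<in> borel_measurable M" "g \<in> borel_measurable M" using assms unfolding bounded_meas_def by blast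
  then have "\<forall>x\<in>space M. \<bar>g x - f x\<bar> \<le> B1 + B2" by (smt (verit))
  with m show ?thesis unfolding bounded_meas_def by auto
qed

lemma Q_const: assumes "markov_op M Q" "x \<in> space M" shows "Q (\<lambda>_. c) x = c"
proof -
  have "Q (\<lambda>y. c * (\<lambda>_. 1) y) x = c * Q (\<lambda>_. 1) x"
    using assms bm_const[of M 1] unfolding markov_op_def by blast
  then show ?thesis using assms unfolding markov_op_def by simp
qed

lemma Q_mono: assumes Q: "markov_op M Q" and f: "bounded_meas M f" and g: "bounded_meas M g"
  and le: "\<forall>y\<in>space M. f y \<le> g y" and x: "x \<in> space M" shows "Q f x \<le> Q g x"
proof -
  have h: "bounded_meas M (\<lambda>y. g y - f y)" using bm_diff[OF f g] .
  have "Q (\<lambda>y. f y + (\<lambda>y. g y - f y) y) x = Q f x + Q (\<lambda>y. g y - f y) x"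
    using Q f h x unfolding markov_op_def by blast
  moreover have "Q (\<lambda>y. g y - f y) x \<ge> 0"
    using Q h le x unfolding markov_op_def by auto
  ultimately show ?thesis by simp
qed

lemma Q_resp: assumes Q: "markov_op M Q" and f: "bounded_meas M f" and g: "bounded_meas M g"
  and eq: "\<forall>y\<in>space M. f y = g y" and x: "x \<in> space M" shows "Q f x = Q g x"
  using Q_mono[OF Q f g _ x] Q_mono[OF Q g f _ x] eq by force

lemma Q_bound: assumes Q: "markov_op M Q" and f: "bounded_meas M f"
  and b: "\<forall>y\<in>space M. \<bar>f y\<bar> \<le> B" and x: "x \<in> space M" shows "\<bar>Q f x\<bar> \<le> B"
  using Q_mono[OF Q f bm_const[of M B] _ x] Q_mono[OF Q bm_const[of M "-B"] f _ x] b
    Q_const[OF Q x, of B] Q_const[OF Q x, of "-B"] by force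

lemma upd_space: assumes "v \<in> space (torus N)" "i < N" "j < N" "a \<in> sphere 0 1" "b \<in> sphere 0 1"
  shows "v(i := a, j := b) \<in> space (torus N)"
  using assms by (auto simp: space_torus PiE_iff extensional_def)

lemma space_M2: "space (circle \<Otimes>\<^sub>M circle) = sphere 0 1 \<times> sphere 0 1"
  by (simp add: space_pair_measure space_circle)

lemma upd_meas: assumes v: "v \<in> space (torus N)" and ij: "i < N" "j < N"
  shows "(\<lambda>p. v(i := fst p, j := snd p)) \<in> measurable (circle \<Otimes>\<^sub>M circle) (torus N)"
  unfolding torus_def
proof (rule measurable_PiM_single'[where f = "\<lambda>l p. (v(i := fst p, j := snd p)) l"])
  fix l assume l: "l \<in> {..<N}"
  show "(\<lambda>p. (v(i := fst p, j := snd p)) l) \<in> circle \<Otimes>\<^sub>M circle \<rightarrow>\<^sub>M circle"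
  proof (cases "l = j")
    case True then show ?thesis by simp
  next
    case False
    show ?thesis
    proof (cases "l = i")
      case True then show ?thesis using False by simp
    next
      case False2: False
      have "v l \<in> space circle" using v l by (auto simp: space_torus space_circle PiE_iff)
      then show ?thesis using False False2 by simp
    qed
  qed
next
  show "(\<lambda>p l. (v(i := fst p, j := snd p)) l) \<in> space (circle \<Otimes>\<^sub>M circle) \<rightarrow> {..<N} \<rightarrow>\<^sub>E space circle"
  proof (rule Pi_I)
    fix p assume "p \<in> space (circle \<Otimes>\<^sub>M circle)"
    then obtain a b where p: "p = (a, b)" "a \<in> sphere 0 1" "b \<in> sphere 0 1" by (auto simp: space_M2)
    have "v(i := a, j := b) \<in> {..<N} \<rightarrow>\<^sub>E space circle"
      using upd_space[OF v ij p(2,3)] by (simp add: space_torus space_circle)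
    then show "(\<lambda>l. (v(i := fst p, j := snd p)) l) \<in> {..<N} \<rightarrow>\<^sub>E space circle"
      using p(1) by (simp del: fun_upd_apply)
  qed
qed

lemma upd_bm: assumes v: "v \<in> space (torus N)" and ij: "i < N" "j < N" and phi: "bounded_meas (torus N) \<phi>"
  shows "bounded_meas (circle \<Otimes>\<^sub>M circle) (\<lambda>(a, b). \<phi> (v(i := a, j := b)))"
proof -
  obtain B where B: "\<forall>x\<in>space (torus N). \<bar>\<phi> x\<bar> \<le> B" and m: "\<phi> \<in> borel_measurable (torus N)"
    using phi unfolding bounded_meas_def by blast
  have "(\<lambda>p. \<phi> (v(i := fst p, j := snd p))) \<in> borel_measurable (circle \<Otimes>\<^sub>M circle)"
    using measurable_compose[OF upd_meas[OF v ij] m] by simp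
  moreover have "(\<lambda>(a, b). \<phi> (v(i := a, j := b))) = (\<lambda>p. \<phi> (v(i := fst p, j := snd p)))"
    by (auto simp: fun_eq_iff)
  moreover have "\<forall>x\<in>space (circle \<Otimes>\<^sub>M circle). \<bar>(\<lambda>(a, b). \<phi> (v(i := a, j := b))) x\<bar> \<le> B"
    using B upd_space[OF v ij] by (auto simp: space_M2)
  ultimately show ?thesis unfolding bounded_meas_def by auto
qed


lemma torus_perm_integral:
  fixes f :: "(nat \<Rightarrow> complex) \<Rightarrow> real"
  assumes p: "\<sigma> permutes {..<N}" and f: "f \<in> borel_measurable (torus N)"
  shows "(\<integral>v. f (v \<circ> \<sigma>) \<partial>torus N) = (\<integral>v. f v \<partial>torus N)"
proof -
  have inj: "inj_on \<sigma> {..<N}" by (rule permutes_inj_on[OF p])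
  have into: "\<sigma> \<in> {..<N} \<rightarrow> {..<N}" using permutes_in_image[OF p] by (simp add: Pi_iff)
  have d: "distr (torus N) (torus N) (\<lambda>\<omega>. \<lambda>n\<in>{..<N}. \<omega> (\<sigma> n)) = torus N"
    using distr_PiM_reindex[of "{..<N}" "\<lambda>_. circle" \<sigma> "{..<N}", OF prob_circle inj into]
    by (simp add: torus_def)
  have m: "(\<lambda>\<omega>. \<lambda>n\<in>{..<N}. \<omega> (\<sigma> n)) \<in> measurable (torus N) (torus N)"
    unfolding torus_def
  proof (rule measurable_restrict)
    fix n assume "n \<in> {..<N}"
    then have "\<sigma> n \<in> {..<N}" using into by blast
    then show "(\<lambda>\<omega>. \<omega> (\<sigma> n)) \<in> measurable (Pi\<^sub>M {..<N} (\<lambda>_. circle)) circle"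
      by (rule measurable_component_singleton)
  qed
  have "(\<integral>v. f v \<partial>torus N) = (\<integral>v. f v \<partial>distr (torus N) (torus N) (\<lambda>\<omega>. \<lambda>n\<in>{..<N}. \<omega> (\<sigma> n)))"
    using d by (rule arg_cong[where f="\<lambda>M. integral\<^sup>L M f", symmetric])
  also have "\<dots> = (\<integral>v. f (\<lambda>n\<in>{..<N}. v (\<sigma> n)) \<partial>torus N)"
    by (rule integral_distr[OF m f])
  also have "\<dots> = (\<integral>v. f (v \<circ> \<sigma>) \<partial>torus N)"
  proof -
    have pw: "(\<lambda>n\<in>{..<N}. v (\<sigma> n)) = v \<circ> \<sigma>" if v: "v \<in> space (torus N)" for v
    proof
      fix n show "(\<lambda>n\<in>{..<N}. v (\<sigma> n)) n = (v \<circ> \<sigma>) n"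
      proof (cases "n < N")
        case False
        then have "\<sigma> n = n" using permutes_not_in[OF p] by simp
        moreover have "v n = undefined" using v False by (auto simp: space_torus PiE_iff extensional_def)
        ultimately show ?thesis using False by simp
      qed simp
    qed
    show ?thesis by (rule Bochner_Integration.integral_cong) (simp_all add: pw)
  qed
  finally show ?thesis by simp
qed


lemma split_sum: "k \<le> (n::nat) \<Longrightarrow> sum h {..<n} = sum h {..<k} + sum h {k..<n}"
  by (metis atLeast0LessThan le0 sum.atLeastLessThan_concat)

lemma arith6:
  fixes d s k :: real
  assumes "d > 0"
  shows "2 / d * (s * (k * (k - 1))) + 2 * (k - 1) / d * (2 * k * s) = 6 * (k * (k - 1)) / d * s"
  using assms
  by (simp add: field_simps)

lemma arith7:
  fixes f a c dd n k :: real
  assumes "n - 1 > 0"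
  shows "f * (2 / (n - 1) * (a + dd)) = f * (2 * c + (2 / (n - 1) * a - 2 * (k - 1) / (n - 1) * c)) + 2 / (n - 1) * (f * dd - (n - k) * (f * c))"
proof -
  define i where "i = 1 / (n - 1)"
  have hi: "(n - 1) * i = 1" using assms unfolding i_def by simp
  have e: "\<And>x. x / (n - 1) = x * i" unfolding i_def by simp
  show ?thesis unfolding e using hi by algebra
qed

lemma sum_lt_id2: "2 * (\<Sum>j<k. real j) = real k * (real k - 1)"
  by (induction k) (auto simp: algebra_simps)

theorem mainTheorem5:
  fixes N k :: nat
    and Q :: "((complex \<times> complex) \<Rightarrow> real) \<Rightarrow> (complex \<times> complex) \<Rightarrow> real"
    and F \<phi> :: "(nat \<Rightarrow> complex) \<Rightarrow> real"
  assumes "N \<ge> 2"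
    and "N \<ge> k + 1"
    and "markov_op (circle \<Otimes>\<^sub>M circle) Q"
    and "\<And>i j \<psi>. i < N \<Longrightarrow> j < N \<Longrightarrow> i \<noteq> j \<Longrightarrow> bounded_meas (torus N) \<psi> \<Longrightarrow>
           Qij Q i j \<psi> \<in> borel_measurable (torus N)"
    and "symmetric_density N F"
    and "bounded_meas (torus N) \<phi>"
    and "depends_only N k \<phi>"
  shows "\<exists>\<psi>. \<psi> \<in> borel_measurable (torus N) \<and> depends_only N (k + 1) \<psi> \<and>
           (\<forall>v\<in>space (torus N). \<bar>\<psi> v\<bar> \<le> 6 * (real k * (real k - 1)) / (real N - 1) * sup_norm (torus N) \<phi>) \<and>
           (\<integral>v. F v * Lop N Q \<phi> v \<partial>torus N) =
           (\<integral>v. F v * ((2 * (\<Sum>i<k. (Qij Q i k \<phi> v - \<phi> v))) + \<psi> v) \<partial>torus N)"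
proof -
  note Qm = assms(3)
  note phib = assms(6)
  note dep = assms(7)[unfolded depends_only_def]
  have depI: "\<phi> x = \<phi> y" if "x \<in> space (torus N)" "y \<in> space (torus N)" "\<And>l. l < k \<Longrightarrow> x l = y l" for x y
    using dep that by blast
  have phim: "\<phi> \<in> borel_measurable (torus N)" using phib unfolding bounded_meas_def by blast
  obtain B0 where B0: "\<forall>x\<in>space (torus N). \<bar>\<phi> x\<bar> \<le> B0" using phib unfolding bounded_meas_def by blast
  have Fm: "F \<in> borel_measurable (torus N)" and Fpos: "\<forall>v\<in>space (torus N). F v \<ge> 0"
    and Fi: "integrable (torus N) F"
    and Fsym: "\<And>\<sigma> v. \<sigma> permutes {..<N} \<Longrightarrow> v \<in> space (torus N) \<Longrightarrow> F (v \<circ> \<sigma>) = F v"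
    using assms(5) unfolding symmetric_density_def by blast+
  define s where "s = sup_norm (torus N) \<phi>"
  have ne: "(\<lambda>l\<in>{..<N}. 1::complex) \<in> space (torus N)" by (simp add: space_torus)
  have phis: "\<bar>\<phi> v\<bar> \<le> s" if "v \<in> space (torus N)" for v
    unfolding s_def sup_norm_def
    by (rule cSUP_upper[OF that]) (use B0 in \<open>auto simp: bdd_above_def\<close>)
  have s0: "0 \<le> s" using phis[OF ne] by linarith
  have kN: "k < N" using assms(2) by simp
  have N1: "real N - 1 > 0" using assms(1) by simp
  have pt: "(v i, v j) \<in> space (circle \<Otimes>\<^sub>M circle)" if "v \<in> space (torus N)" "i < N" "j < N" for v i j
    using that by (auto simp: space_M2 space_torus PiE_iff)

  have Qb: "\<bar>Qij Q i j \<phi> v\<bar> \<le> s" if v: "v \<in> space (torus N)" and ij: "i < N" "j < N" for i j v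
    unfolding Qij_def
  proof (rule Q_bound[OF Qm upd_bm[OF v ij phib] _ pt[OF v ij]])
    show "\<forall>y\<in>space (circle \<Otimes>\<^sub>M circle). \<bar>(\<lambda>(a, b). \<phi> (v(i := a, j := b))) y\<bar> \<le> s"
      using phis upd_space[OF v ij] by (auto simp: space_M2)
  qed

  have Qvan: "Qij Q i j \<phi> v = \<phi> v" if v: "v \<in> space (torus N)" and ij: "k \<le> i" "i < j" "j < N" for i j v
  proof -
    have ij': "i < N" "j < N" using ij by auto
    have "Qij Q i j \<phi> v = Q (\<lambda>_. \<phi> v) (v i, v j)"
      unfolding Qij_def
    proof (rule Q_resp[OF Qm upd_bm[OF v ij' phib] bm_const _ pt[OF v ij']])
      show "\<forall>y\<in>space (circle \<Otimes>\<^sub>M circle). (\<lambda>(a, b). \<phi> (v(i := a, j := b))) y = \<phi> v"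
      proof
        fix y assume "y \<in> space (circle \<Otimes>\<^sub>M circle)"
        then obtain a b where y: "y = (a, b)" "a \<in> sphere 0 1" "b \<in> sphere 0 1" by (auto simp: space_M2)
        have "\<phi> (v(i := a, j := b)) = \<phi> v"
          by (rule depI[OF upd_space[OF v ij' y(2,3)] v]) (use ij in auto)
        then show "(\<lambda>(a, b). \<phi> (v(i := a, j := b))) y = \<phi> v" using y by simp
      qed
    qed
    also have "\<dots> = \<phi> v" by (rule Q_const[OF Qm pt[OF v ij']])
    finally show ?thesis .
  qed

  have Qdep: "Qij Q i j \<phi> v = Qij Q i j \<phi> w" if v: "v \<in> space (torus N)" and w: "w \<in> space (torus N)"
    and ij: "i < k + 1" "j < k + 1" and vw: "\<forall>l<k+1. v l = w l" for i j v w
  proof -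
    have ij': "i < N" "j < N" using ij assms(2) by auto
    have "Q (\<lambda>(a, b). \<phi> (v(i := a, j := b))) (v i, v j) = Q (\<lambda>(a, b). \<phi> (w(i := a, j := b))) (v i, v j)"
    proof (rule Q_resp[OF Qm upd_bm[OF v ij' phib] upd_bm[OF w ij' phib] _ pt[OF v ij']])
      show "\<forall>y\<in>space (circle \<Otimes>\<^sub>M circle). (\<lambda>(a, b). \<phi> (v(i := a, j := b))) y = (\<lambda>(a, b). \<phi> (w(i := a, j := b))) y"
      proof
        fix y assume "y \<in> space (circle \<Otimes>\<^sub>M circle)"
        then obtain a b where y: "y = (a, b)" "a \<in> sphere 0 1" "b \<in> sphere 0 1" by (auto simp: space_M2)
        have "\<phi> (v(i := a, j := b)) = \<phi> (w(i := a, j := b))"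
          by (rule depI[OF upd_space[OF v ij' y(2,3)] upd_space[OF w ij' y(2,3)]]) (use vw in auto)
        then show "(\<lambda>(a, b). \<phi> (v(i := a, j := b))) y = (\<lambda>(a, b). \<phi> (w(i := a, j := b))) y" using y by simp
      qed
    qed
    moreover have "v i = w i" "v j = w j" using vw ij by auto
    ultimately show ?thesis unfolding Qij_def by simp
  qed

  have Qswap: "Qij Q i j \<phi> (v \<circ> Transposition.transpose k j) = Qij Q i k \<phi> v"
    if v: "v \<in> space (torus N)" and ij: "i < k" "k < j" "j < N" for i j v
  proof -
    let ?s = "Transposition.transpose k j"
    have sp: "?s permutes {..<N}" using ij by (intro permutes_swap_id) auto
    have vs: "v \<circ> ?s \<in> space (torus N)"
      using v sp permutes_in_image[OF sp] permutes_not_in[OF sp]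
      by (auto simp: space_torus PiE_iff extensional_def)
    have ij': "i < N" "j < N" "k < N" using ij by auto
    have "Q (\<lambda>(a, b). \<phi> ((v \<circ> ?s)(i := a, j := b))) (v i, v k) = Q (\<lambda>(a, b). \<phi> (v(i := a, k := b))) (v i, v k)"
    proof (rule Q_resp[OF Qm upd_bm[OF vs ij'(1,2) phib] upd_bm[OF v ij'(1,3) phib] _ pt[OF v ij'(1,3)]])
      show "\<forall>y\<in>space (circle \<Otimes>\<^sub>M circle). (\<lambda>(a, b). \<phi> ((v \<circ> ?s)(i := a, j := b))) y = (\<lambda>(a, b). \<phi> (v(i := a, k := b))) y"
      proof
        fix y assume "y \<in> space (circle \<Otimes>\<^sub>M circle)"
        then obtain a b where y: "y = (a, b)" "a \<in> sphere 0 1" "b \<in> sphere 0 1" by (auto simp: space_M2)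
        have "\<phi> ((v \<circ> ?s)(i := a, j := b)) = \<phi> (v(i := a, k := b))"
          by (rule depI[OF upd_space[OF vs ij'(1,2) y(2,3)] upd_space[OF v ij'(1,3) y(2,3)]])
            (use ij in \<open>auto simp: transpose_def\<close>)
        then show "(\<lambda>(a, b). \<phi> ((v \<circ> ?s)(i := a, j := b))) y = (\<lambda>(a, b). \<phi> (v(i := a, k := b))) y"
          using y by simp
      qed
    qed
    moreover have "(v \<circ> ?s) i = v i" "(v \<circ> ?s) j = v k" using ij by (auto simp: transpose_def)
    ultimately show ?thesis unfolding Qij_def by simp
  qed

  define g where "g i j v = Qij Q i j \<phi> v - \<phi> v" for i j v
  have gm: "g i j \<in> borel_measurable (torus N)" if "i < N" "j < N" "i \<noteq> j" for i j
    unfolding g_def[abs_def] using assms(4)[OF that phib] phim by measurable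
  have gb: "\<bar>g i j v\<bar> \<le> 2 * s" if "v \<in> space (torus N)" "i < N" "j < N" for i j v
    using Qb[OF that] phis[OF that(1)] unfolding g_def by linarith
  have intF: "integrable (torus N) (\<lambda>v. F v * h v)"
    if hm: "h \<in> borel_measurable (torus N)" and hb: "\<forall>v\<in>space (torus N). \<bar>h v\<bar> \<le> B" for h :: "(nat \<Rightarrow> complex) \<Rightarrow> real" and B :: real
  proof (rule Bochner_Integration.integrable_bound[where f = "\<lambda>v. B * F v"])
    show "integrable (torus N) (\<lambda>v. B * F v)" using Fi by simp
    show "(\<lambda>v. F v * h v) \<in> borel_measurable (torus N)" using Fm hm by measurable
    show "AE x in torus N. norm (F x * h x) \<le> norm (B * F x)"
    proof (rule AE_I2)
      fix x assume x: "x \<in> space (torus N)"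
      have "\<bar>F x * h x\<bar> = F x * \<bar>h x\<bar>" using Fpos x by (simp add: abs_mult)
      also have "\<dots> \<le> F x * B" using Fpos x hb by (intro mult_left_mono) auto
      also have "\<dots> \<le> \<bar>B * F x\<bar>" by (simp add: mult.commute)
      finally show "norm (F x * h x) \<le> norm (B * F x)" by simp
    qed
  qed
  have intg: "integrable (torus N) (\<lambda>v. F v * g i j v)" if "i < N" "j < N" "i \<noteq> j" for i j
    using intF[OF gm[OF that]] gb that by blast

  have symint: "(\<integral>v. F v * g i j v \<partial>torus N) = (\<integral>v. F v * g i k v \<partial>torus N)"
    if ij: "i < k" "k \<le> j" "j < N" for i j
  proof (cases "j = k")
    case False
    then have kj: "k < j" using ij by simp
    let ?s = "Transposition.transpose k j"
    have sp: "?s permutes {..<N}" using ij by (intro permutes_swap_id) auto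
    have "(\<integral>v. F v * g i j v \<partial>torus N) = (\<integral>v. (\<lambda>v. F v * g i j v) (v \<circ> ?s) \<partial>torus N)"
    proof (rule torus_perm_integral[OF sp, symmetric])
      have "g i j \<in> borel_measurable (torus N)" using gm ij kj by simp
      then show "(\<lambda>v. F v * g i j v) \<in> borel_measurable (torus N)" using Fm by measurable
    qed
    also have "\<dots> = (\<integral>v. F v * g i k v \<partial>torus N)"
    proof (rule Bochner_Integration.integral_cong[OF refl])
      fix v assume v: "v \<in> space (torus N)"
      have vs: "v \<circ> ?s \<in> space (torus N)"
        using v sp permutes_in_image[OF sp] permutes_not_in[OF sp]
        by (auto simp: space_torus PiE_iff extensional_def)
      have "\<phi> (v \<circ> ?s) = \<phi> v"
        by (rule depI[OF vs v]) (use ij kj in \<open>auto simp: transpose_def\<close>)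
      then show "(\<lambda>v. F v * g i j v) (v \<circ> ?s) = F v * g i k v"
        using Fsym[OF sp v] Qswap[OF v ij(1) kj ij(3)] unfolding g_def by simp
    qed
    finally show ?thesis .
  qed simp

  define A where "A v = (\<Sum>j<k. \<Sum>i<j. g i j v)" for v
  define C where "C v = (\<Sum>i<k. g i k v)" for v
  define D where "D v = (\<Sum>i<k. \<Sum>j\<in>{k..<N}. g i j v)" for v
  define \<psi> where "\<psi> v = 2 / (real N - 1) * A v - 2 * (real k - 1) / (real N - 1) * C v" for v

  have Am: "A \<in> borel_measurable (torus N)" unfolding A_def[abs_def]
    by (intro borel_measurable_sum gm) (use kN in auto)
  have Cm: "C \<in> borel_measurable (torus N)" unfolding C_def[abs_def]
    by (intro borel_measurable_sum gm) (use kN in auto)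
  have gdep: "g i j v = g i j w" if v: "v \<in> space (torus N)" and w: "w \<in> space (torus N)"
    and ij: "i < k + 1" "j < k + 1" and vw: "\<forall>l<k+1. v l = w l" for i j v w
  proof -
    have "\<phi> v = \<phi> w" by (rule depI[OF v w]) (use vw in auto)
    then show ?thesis unfolding g_def using Qdep[OF v w ij vw] by simp
  qed
  have Ab: "\<bar>A v\<bar> \<le> s * (real k * (real k - 1))" if v: "v \<in> space (torus N)" for v
  proof -
    have "\<bar>A v\<bar> \<le> (\<Sum>j<k. \<bar>\<Sum>i<j. g i j v\<bar>)" unfolding A_def by (rule sum_abs)
    also have "\<dots> \<le> (\<Sum>j<k. \<Sum>i<j. \<bar>g i j v\<bar>)" by (intro sum_mono sum_abs)
    also have "\<dots> \<le> (\<Sum>j<k. \<Sum>i<j. 2 * s)" using kN by (intro sum_mono gb[OF v]) auto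
    also have "\<dots> = s * (2 * (\<Sum>j<k. real j))" by (simp add: sum_distrib_left sum_distrib_right mult_ac)
    also have "\<dots> = s * (real k * (real k - 1))" by (simp add: sum_lt_id2)
    finally show ?thesis .
  qed
  have Cb: "\<bar>C v\<bar> \<le> 2 * real k * s" if v: "v \<in> space (torus N)" for v
  proof -
    have "\<bar>C v\<bar> \<le> (\<Sum>i<k. \<bar>g i k v\<bar>)" unfolding C_def by (rule sum_abs)
    also have "\<dots> \<le> (\<Sum>i<k. 2 * s)" using kN by (intro sum_mono gb[OF v]) auto
    finally show ?thesis by simp
  qed
  have \<psi>b: "\<bar>\<psi> v\<bar> \<le> 6 * (real k * (real k - 1)) / (real N - 1) * s" if v: "v \<in> space (torus N)" for v
  proof (cases "k = 0")
    case True
    then show ?thesis by (simp add: \<psi>_def A_def C_def)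
  next
    case False
    then have k1: "real k - 1 \<ge> 0" by simp
    have c1: "0 \<le> 2 / (real N - 1)" using N1 by simp
    have c2: "0 \<le> 2 * (real k - 1) / (real N - 1)" using N1 k1 by simp
    have "\<bar>\<psi> v\<bar> \<le> \<bar>2 / (real N - 1) * A v\<bar> + \<bar>2 * (real k - 1) / (real N - 1) * C v\<bar>"
      unfolding \<psi>_def by (rule abs_triangle_ineq4)
    also have "\<dots> = 2 / (real N - 1) * \<bar>A v\<bar> + 2 * (real k - 1) / (real N - 1) * \<bar>C v\<bar>"
      by (simp only: abs_mult abs_of_nonneg[OF c1] abs_of_nonneg[OF c2])
    also have "\<dots> \<le> 2 / (real N - 1) * (s * (real k * (real k - 1))) + 2 * (real k - 1) / (real N - 1) * (2 * real k * s)"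
      by (intro add_mono mult_left_mono Ab[OF v] Cb[OF v] c1 c2)
    also have "\<dots> = 6 * (real k * (real k - 1)) / (real N - 1) * s"
      by (rule arith6[OF N1])
    finally show ?thesis .
  qed

  have Lpt: "Lop N Q \<phi> v = 2 / (real N - 1) * (A v + D v)" if v: "v \<in> space (torus N)" for v
  proof -
    have "Lop N Q \<phi> v = 2 / (real N - 1) * (\<Sum>j<N. \<Sum>i<j. g i j v)"
      unfolding Lop_def g_def by simp
    also have "(\<Sum>j<N. \<Sum>i<j. g i j v) = A v + (\<Sum>j\<in>{k..<N}. \<Sum>i<j. g i j v)"
      unfolding A_def using split_sum[of k N] kN by simp
    also have "(\<Sum>j\<in>{k..<N}. \<Sum>i<j. g i j v) = (\<Sum>j\<in>{k..<N}. \<Sum>i<k. g i j v)"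
    proof (rule sum.cong[OF refl])
      fix j assume j: "j \<in> {k..<N}"
      have "(\<Sum>i<j. g i j v) = (\<Sum>i<k. g i j v) + (\<Sum>i\<in>{k..<j}. g i j v)"
        using split_sum[of k j] j by simp
      also have "(\<Sum>i\<in>{k..<j}. g i j v) = 0"
        using j by (intro sum.neutral) (auto simp: g_def Qvan[OF v])
      finally show "(\<Sum>i<j. g i j v) = (\<Sum>i<k. g i j v)" by simp
    qed
    also have "\<dots> = D v" unfolding D_def by (rule sum.swap)
    finally show ?thesis .
  qed

  define X where "X v = (\<Sum>i<k. \<Sum>j\<in>{k..<N}. F v * g i j v)" for v
  define Y where "Y v = (\<Sum>i<k. F v * g i k v)" for v
  have Xi: "integrable (torus N) X" unfolding X_def[abs_def]
    by (intro Bochner_Integration.integrable_sum intg) (use kN in auto)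
  have Yi: "integrable (torus N) Y" unfolding Y_def[abs_def]
    by (intro Bochner_Integration.integrable_sum intg) (use kN in auto)
  have Hi: "integrable (torus N) (\<lambda>v. F v * (2 * C v + \<psi> v))"
  proof (rule intF)
    show "(\<lambda>v. 2 * C v + \<psi> v) \<in> borel_measurable (torus N)"
      unfolding \<psi>_def[abs_def] using Am Cm by measurable
    show "\<forall>v\<in>space (torus N). \<bar>2 * C v + \<psi> v\<bar> \<le> 2 * (2 * real k * s) + 6 * (real k * (real k - 1)) / (real N - 1) * s"
      using Cb \<psi>b by (smt (verit))
  qed
  have pt2: "F v * Lop N Q \<phi> v = F v * (2 * C v + \<psi> v) + 2 / (real N - 1) * (X v - (real N - real k) * Y v)"
    if v: "v \<in> space (torus N)" for v
  proof -
    have XD: "X v = F v * D v" unfolding X_def D_def by (simp add: sum_distrib_left)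
    have YC: "Y v = F v * C v" unfolding Y_def C_def by (simp add: sum_distrib_left)
    show ?thesis unfolding Lpt[OF v] XD YC \<psi>_def
      by (rule arith7[OF N1])
  qed
  have XY: "(\<integral>v. X v \<partial>torus N) = (real N - real k) * (\<integral>v. Y v \<partial>torus N)"
  proof -
    have "(\<integral>v. X v \<partial>torus N) = (\<Sum>i<k. \<Sum>j\<in>{k..<N}. \<integral>v. F v * g i j v \<partial>torus N)"
      unfolding X_def using kN
      by (subst Bochner_Integration.integral_sum, (intro Bochner_Integration.integrable_sum intg; auto)) (intro sum.cong refl Bochner_Integration.integral_sum intg; auto)
    also have "\<dots> = (\<Sum>i<k. \<Sum>j\<in>{k..<N}. \<integral>v. F v * g i k v \<partial>torus N)"
      by (intro sum.cong refl symint) auto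
    also have "\<dots> = (real N - real k) * (\<Sum>i<k. \<integral>v. F v * g i k v \<partial>torus N)"
      using kN by (simp add: sum_distrib_left of_nat_diff)
    also have "(\<Sum>i<k. \<integral>v. F v * g i k v \<partial>torus N) = (\<integral>v. Y v \<partial>torus N)"
      unfolding Y_def using kN by (intro Bochner_Integration.integral_sum[symmetric] intg) auto
    finally show ?thesis .
  qed

  show ?thesis
  proof (intro exI[of _ \<psi>] conjI)
    show "\<psi> \<in> borel_measurable (torus N)"
      unfolding \<psi>_def[abs_def] using Am Cm by measurable
    show "depends_only N (k + 1) \<psi>"
      unfolding depends_only_def
    proof (intro ballI impI)
      fix v w assume v: "v \<in> space (torus N)" and w: "w \<in> space (torus N)" and vw: "\<forall>i<k + 1. v i = w i"
      have "A v = A w" unfolding A_def by (intro sum.cong refl gdep[OF v w _ _ vw]) auto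
      moreover have "C v = C w" unfolding C_def by (intro sum.cong refl gdep[OF v w _ _ vw]) auto
      ultimately show "\<psi> v = \<psi> w" unfolding \<psi>_def by simp
    qed
    show "\<forall>v\<in>space (torus N). \<bar>\<psi> v\<bar> \<le> 6 * (real k * (real k - 1)) / (real N - 1) * sup_norm (torus N) \<phi>"
      using \<psi>b unfolding s_def by blast
    have "(\<integral>v. F v * Lop N Q \<phi> v \<partial>torus N) =
        (\<integral>v. F v * (2 * C v + \<psi> v) + 2 / (real N - 1) * (X v - (real N - real k) * Y v) \<partial>torus N)"
      by (rule Bochner_Integration.integral_cong[OF refl pt2])
    also have "\<dots> = (\<integral>v. F v * (2 * C v + \<psi> v) \<partial>torus N) + 2 / (real N - 1) * ((\<integral>v. X v \<partial>torus N) - (real N - real k) * (\<integral>v. Y v \<partial>torus N))"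
      using Hi Xi Yi by simp
    also have "\<dots> = (\<integral>v. F v * (2 * C v + \<psi> v) \<partial>torus N)" using XY by simp
    also have "\<dots> = (\<integral>v. F v * ((2 * (\<Sum>i<k. (Qij Q i k \<phi> v - \<phi> v))) + \<psi> v) \<partial>torus N)"
      unfolding C_def g_def by simp
    finally show "(\<integral>v. F v * Lop N Q \<phi> v \<partial>torus N) =
           (\<integral>v. F v * ((2 * (\<Sum>i<k. (Qij Q i k \<phi> v - \<phi> v))) + \<psi> v) \<partial>torus N)" .
  qed
qed

end
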